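(* Let $\gamma=(\alpha,\beta)\in\mathbb N_0^{2n}$ with $\alpha\ge\beta$, let $\sigma\in\{+,-\}$ with $\alpha>\beta$ if $\sigma=-$, and let $\tilde\gamma=(\tilde\alpha,\tilde\alpha)\in\mathbb N_0^{2n}$. Let $z_\sigma^{(\ell)}$ be the Commutator Chain of Type I generated by $g_\sigma^\gamma$ and $g_+^{\tilde\gamma}$. Assume there is an index $k$ with $\alpha_k\neq\beta_k$ and $\tilde\alpha_k\neq0$. Then for every $\ell\ge0$, $z_\sigma^{(\ell)}\neq0$ and $$\deg(z_\sigma^{(\ell)})=2\ell(|\tilde\alpha|-1)+|\alpha|+|\beta| .$$
   Context: Fix $n\ge 1$. The Weyl algebra $A_n$ is the unital associative $\mathbb{C}$-algebra generated by $a_1,\dots,a_n,a_1^\dagger,\dots,a_n^\dagger$ subject to $[a_i,a_j^\dagger]=\delta_{ij}$ and $[a_i,a_j]=[a_i^\dagger,a_j^\dagger]=0$. For $\gamma=(\alpha,\beta)\in\mathbb N_0^{2n}$ set $a^{\gamma}=(a_1^\dagger)^{\alpha_1}\cdots(a_n^\dagger)^{\alpha_n}a_1^{\beta_1}\cdots a_n^{\beta_n}$; these form a $\mathbb C$-basis; $|\alpha|=\sum_j\alpha_j$, $|\gamma|=|\alpha|+|\beta|$. For $0\neq g\in A_n$, $\deg(g)$ is the largest $|\gamma|$ with $a^\gamma$ having nonzero coefficient in $g$; $\deg(0)=-\infty$. $\dagger$ is the conjugate-linear anti-automorphism with $(a_j)^\dagger=a_j^\dagger$, $(a_j^\dagger)^\dagger=a_j$.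 $\hat A_n=\{g\in A_n:g^\dagger=-g\}$; $g_+^\gamma=i((a^\gamma)^\dagger+a^\gamma)$, $g_-^\gamma=(a^\gamma)^\dagger-a^\gamma$. The order on $\mathbb N_0^n$ is lexicographic. Commutator Chain of Type I generated by $g_\sigma^\gamma$ and $g_+^{\tilde\gamma}$ (with $\tilde\gamma=(\tilde\alpha,\tilde\alpha)$): $z_\sigma^{(0)}=g_\sigma^\gamma$ and $z_\sigma^{(\ell+1)}=[g_+^{\tilde\gamma},z_\sigma^{(\ell)}]$ for $\ell\ge0$. *)

theory Defs
  imports Complex_Main
begin

text \<open>Weyl algebra A_n, represented in the normal-ordered basis
  a^(alpha,beta) = (a_1^dag)^alpha_1 ... (a_n^dag)^alpha_n a_1^beta_1 ... a_n^beta_n.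
  Indices are 0..n-1. A multi-index is a function nat => nat vanishing at j >= n.
  An element of A_n is its finitely supported coefficient function.\<close>

type_synonym mono = "(nat \<Rightarrow> nat) \<times> (nat \<Rightarrow> nat)"
type_synonym weyl = "mono \<Rightarrow> complex"

definition wsupp :: "weyl \<Rightarrow> mono set" where
  "wsupp f = {\<gamma>. f \<gamma> \<noteq> 0}"

definition mabs :: "nat \<Rightarrow> (nat \<Rightarrow> nat) \<Rightarrow> nat" where
  "mabs n \<alpha> = (\<Sum>j<n. \<alpha> j)"

text \<open>Coefficient of a^c in the product a^a * a^b, obtained by normal ordering
  with a_j^beta (a_j^dag)^alpha' = sum_k k! C(beta,k) C(alpha',k) (a_j^dag)^(alpha'-k) a_j^(beta-k).\<close>
definition mono_coeff :: "nat \<Rightarrow> mono \<Rightarrow> mono \<Rightarrow> mono \<Rightarrow> nat" where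
  "mono_coeff n a b c =
    (let \<kappa> = (\<lambda>j. fst a j + fst b j - fst c j) in
     if (\<forall>j<n. fst c j \<le> fst a j + fst b j \<and> \<kappa> j \<le> snd a j \<and> \<kappa> j \<le> fst b j
               \<and> snd c j + \<kappa> j = snd a j + snd b j)
        \<and> (\<forall>j\<ge>n. fst c j = 0 \<and> snd c j = 0)
     then (\<Prod>j<n. fact (\<kappa> j) * (snd a j choose \<kappa> j) * (fst b j choose \<kappa> j))
     else 0)"

definition wmult :: "nat \<Rightarrow> weyl \<Rightarrow> weyl \<Rightarrow> weyl" where
  "wmult n f g = (\<lambda>\<delta>. \<Sum>\<gamma>1\<in>wsupp f. \<Sum>\<gamma>2\<in>wsupp g.
       f \<gamma>1 * g \<gamma>2 * of_nat (mono_coeff n \<gamma>1 \<gamma>2 \<delta>))"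

definition wcomm :: "nat \<Rightarrow> weyl \<Rightarrow> weyl \<Rightarrow> weyl" where
  "wcomm n f g = (\<lambda>\<delta>. wmult n f g \<delta> - wmult n g f \<delta>)"

definition basis :: "mono \<Rightarrow> weyl" where
  "basis \<gamma> = (\<lambda>\<delta>. if \<delta> = \<gamma> then 1 else 0)"

definition mdag :: "mono \<Rightarrow> mono" where
  "mdag \<gamma> = (snd \<gamma>, fst \<gamma>)"

datatype sign = Plus | Minus

definition gen :: "sign \<Rightarrow> mono \<Rightarrow> weyl" where
  "gen \<sigma> \<gamma> = (case \<sigma> of
      Plus \<Rightarrow> (\<lambda>\<delta>. \<i> * (basis (mdag \<gamma>) \<delta> + basis \<gamma> \<delta>))
    | Minus \<Rightarrow> (\<lambda>\<delta>. basis (mdag \<gamma>) \<delta> - basis \<gamma> \<delta>))"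

text \<open>deg for nonzero elements (largest |gamma| in the support).\<close>
definition wdeg :: "nat \<Rightarrow> weyl \<Rightarrow> nat" where
  "wdeg n f = Max ((\<lambda>\<gamma>. mabs n (fst \<gamma>) + mabs n (snd \<gamma>)) ` wsupp f)"

definition lex_gt :: "nat \<Rightarrow> (nat \<Rightarrow> nat) \<Rightarrow> (nat \<Rightarrow> nat) \<Rightarrow> bool" where
  "lex_gt n \<alpha> \<beta> = (\<exists>j<n. (\<forall>i<j. \<alpha> i = \<beta> i) \<and> \<beta> j < \<alpha> j)"

definition lex_ge :: "nat \<Rightarrow> (nat \<Rightarrow> nat) \<Rightarrow> (nat \<Rightarrow> nat) \<Rightarrow> bool" where
  "lex_ge n \<alpha> \<beta> = ((\<forall>j<n. \<alpha> j = \<beta> j) \<or> lex_gt n \<alpha> \<beta>)"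

definition chainI :: "nat \<Rightarrow> weyl \<Rightarrow> weyl \<Rightarrow> nat \<Rightarrow> weyl" where
  "chainI n g h l = ((\<lambda>z. wcomm n h z) ^^ l) g"

end

theory Submission
  imports Defs
begin


definition mdeg :: "nat \<Rightarrow> mono \<Rightarrow> nat" where
  "mdeg n \<gamma> = mabs n (fst \<gamma>) + mabs n (snd \<gamma>)"

lemma mc_nz:
  assumes "mono_coeff n a b c \<noteq> 0"
  shows "\<forall>j<n. fst c j \<le> fst a j + fst b j \<and> snd c j + (fst a j + fst b j - fst c j) = snd a j + snd b j"
    and "\<forall>j\<ge>n. fst c j = 0 \<and> snd c j = 0"
  using assms unfolding mono_coeff_def Let_def by (auto split: if_splits)

lemma mc_nz_either:
  assumes "mono_coeff n a b c \<noteq> 0 \<or> mono_coeff n b a c \<noteq> 0"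
  shows "\<forall>j<n. fst c j \<le> fst a j + fst b j \<and> snd c j + (fst a j + fst b j - fst c j) = snd a j + snd b j"
    and "\<forall>j\<ge>n. fst c j = 0 \<and> snd c j = 0"
  using assms mc_nz[of n a b c] mc_nz[of n b a c] by (auto simp: add.commute)

lemma deg_from:
  assumes "\<forall>j<n. fst c j \<le> fst a j + fst b j \<and> snd c j + (fst a j + fst b j - fst c j) = snd a j + snd b j"
  shows "mdeg n c + 2 * (\<Sum>j<n. fst a j + fst b j - fst c j) = mdeg n a + mdeg n b"
proof -
  have "(\<Sum>j<n. fst c j + snd c j + 2 * (fst a j + fst b j - fst c j))
      = (\<Sum>j<n. fst a j + snd a j + (fst b j + snd b j))"
    by (rule sum.cong) (use assms in auto)
  then show ?thesis unfolding mdeg_def mabs_def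
    by (simp add: sum.distrib sum_distrib_left)
qed

lemma mc_swap:
  assumes "\<forall>j<n. fst a j + fst b j - fst c j = 0"
  shows "mono_coeff n a b c = mono_coeff n b a c"
proof -
  have e: "\<And>j. j < n \<Longrightarrow> fst b j + fst a j - fst c j = 0" using assms by (simp add: add.commute)
  show ?thesis unfolding mono_coeff_def Let_def using assms e
    by (auto simp: add.commute)
qed

lemma mc_one:
  assumes kn: "k < n"
    and ka: "\<forall>j<n. fst a j + fst b j - fst c j = (if j = k then 1 else 0)"
    and le: "\<forall>j<n. fst c j \<le> fst a j + fst b j"
    and sn: "\<forall>j<n. snd c j + (if j = k then 1 else 0) = snd a j + snd b j"
    and vn: "\<forall>j\<ge>n. fst c j = 0 \<and> snd c j = 0"
  shows "mono_coeff n a b c = snd a k * fst b k"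
proof (cases "1 \<le> snd a k \<and> 1 \<le> fst b k")
  case True
  have cond: "(\<forall>j<n. fst c j \<le> fst a j + fst b j \<and> (fst a j + fst b j - fst c j) \<le> snd a j \<and> (fst a j + fst b j - fst c j) \<le> fst b j
               \<and> snd c j + (fst a j + fst b j - fst c j) = snd a j + snd b j)"
    using ka le sn True by auto
  have "(\<Prod>j<n. fact (fst a j + fst b j - fst c j) * (snd a j choose (fst a j + fst b j - fst c j)) * (fst b j choose (fst a j + fst b j - fst c j)))
      = (\<Prod>j<n. if j = k then snd a k * fst b k else 1)"
    by (rule prod.cong) (use ka in auto)
  also have "\<dots> = snd a k * fst b k" using kn by (simp add: prod.delta)
  finally have P: "(\<Prod>j<n. fact (fst a j + fst b j - fst c j) * (snd a j choose (fst a j + fst b j - fst c j)) * (fst b j choose (fst a j + fst b j - fst c j))) = snd a k * fst b k" .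
  have "mono_coeff n a b c = (\<Prod>j<n. fact (fst a j + fst b j - fst c j) * (snd a j choose (fst a j + fst b j - fst c j)) * (fst b j choose (fst a j + fst b j - fst c j)))"
    unfolding mono_coeff_def Let_def by (rule if_P) (use cond vn in blast)
  then show ?thesis using P by simp
next
  case False
  then have "\<not> (\<forall>j<n. fst c j \<le> fst a j + fst b j \<and> (fst a j + fst b j - fst c j) \<le> snd a j \<and> (fst a j + fst b j - fst c j) \<le> fst b j
               \<and> snd c j + (fst a j + fst b j - fst c j) = snd a j + snd b j)"
    using ka kn by force
  then have "mono_coeff n a b c = 0"
    unfolding mono_coeff_def Let_def by (intro if_not_P) blast
  moreover have "snd a k * fst b k = 0" using False by auto
  ultimately show ?thesis by simp
qed

lemma fin_box:
  assumes "\<forall>j\<ge>n. U j = (0::nat)"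
  shows "finite {\<gamma>::mono. \<forall>j. fst \<gamma> j + snd \<gamma> j \<le> U j}"
proof -
  define M where "M = (\<Sum>j<n. U j)"
  define F where "F = {f::nat\<Rightarrow>nat. \<forall>x. (x \<in> {..<n} \<longrightarrow> f x \<in> {..M}) \<and> (x \<notin> {..<n} \<longrightarrow> f x = 0)}"
  have fF: "finite F" unfolding F_def by (rule finite_set_of_finite_funs) auto
  have "{\<gamma>::mono. \<forall>j. fst \<gamma> j + snd \<gamma> j \<le> U j} \<subseteq> F \<times> F"
  proof
    fix \<gamma> :: mono assume h: "\<gamma> \<in> {\<gamma>. \<forall>j. fst \<gamma> j + snd \<gamma> j \<le> U j}"
    have UM: "\<And>j. j < n \<Longrightarrow> U j \<le> M" unfolding M_def by (rule member_le_sum) auto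
    have h': "\<And>j. fst \<gamma> j + snd \<gamma> j \<le> U j" using h by blast
    have "\<forall>x. (x \<in> {..<n} \<longrightarrow> fst \<gamma> x \<in> {..M}) \<and> (x \<notin> {..<n} \<longrightarrow> fst \<gamma> x = 0)"
    proof (intro allI conjI impI)
      fix x assume "x \<in> {..<n}"
      then show "fst \<gamma> x \<in> {..M}" using UM[of x] h'[of x] by simp
    next
      fix x assume "x \<notin> {..<n}"
      then show "fst \<gamma> x = 0" using assms h'[of x] by simp
    qed
    moreover have "\<forall>x. (x \<in> {..<n} \<longrightarrow> snd \<gamma> x \<in> {..M}) \<and> (x \<notin> {..<n} \<longrightarrow> snd \<gamma> x = 0)"
    proof (intro allI conjI impI)
      fix x assume "x \<in> {..<n}"
      then show "snd \<gamma> x \<in> {..M}" using UM[of x] h'[of x] by simp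
    next
      fix x assume "x \<notin> {..<n}"
      then show "snd \<gamma> x = 0" using assms h'[of x] by simp
    qed
    ultimately show "\<gamma> \<in> F \<times> F" unfolding F_def by (simp add: mem_Times_iff)
  qed
  then show ?thesis using fF by (meson finite_SigmaI finite_subset)
qed

lemma wsupp_h: "wsupp (gen Plus (t,t)) = {(t,t)}"
  unfolding wsupp_def gen_def basis_def mdag_def by auto

lemma wcomm_h:
  "wcomm n (gen Plus (t,t)) f \<delta> = (\<Sum>\<gamma>\<in>wsupp f. 2*\<i> * f \<gamma> *
      (of_nat (mono_coeff n (t,t) \<gamma> \<delta>) - of_nat (mono_coeff n \<gamma> (t,t) \<delta>)))"
proof -
  have h: "gen Plus (t,t) (t,t) = 2*\<i>" unfolding gen_def basis_def mdag_def by simp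
  show ?thesis
    unfolding wcomm_def wmult_def wsupp_h using h
    by (simp add: sum_subtractf[symmetric] algebra_simps)
qed


locale ch =
  fixes n k :: nat and \<alpha> \<beta> t :: "nat \<Rightarrow> nat" and \<sigma> :: sign
  assumes an: "\<forall>j\<ge>n. \<alpha> j = 0" and bn: "\<forall>j\<ge>n. \<beta> j = 0" and tn: "\<forall>j\<ge>n. t j = 0"
    and kn: "k < n" and abk: "\<alpha> k \<noteq> \<beta> k" and tk: "t k \<noteq> 0"
begin

definition s where "s j = t j - (if j = k then 1 else 0)"
definition cm where "cm m = ((\<lambda>j. \<alpha> j + m * s j), (\<lambda>j. \<beta> j + m * s j))"
definition U where "U m j = \<alpha> j + \<beta> j + 2 * m * t j"
definition D where "D = mabs n t"
definition N where "N m = mabs n \<alpha> + mabs n \<beta> + 2 * m * (D - 1)"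
definition Inv where "Inv m f \<longleftrightarrow> (\<forall>\<gamma>. f \<gamma> \<noteq> 0 \<longrightarrow> (\<forall>j. fst \<gamma> j + snd \<gamma> j \<le> U m j) \<and> mdeg n \<gamma> \<le> N m) \<and> f (cm m) \<noteq> 0"

lemma s_t: "s j + (if j = k then 1 else 0) = t j"
  using tk by (simp add: s_def)

lemma sum_s: "(\<Sum>j<n. s j) + 1 = D"
proof -
  have "(\<Sum>j<n. s j + (if j = k then 1 else 0)) = D" unfolding D_def mabs_def by (simp add: s_t)
  moreover have "(\<Sum>j<n. (if j = k then 1 else 0::nat)) = 1" using kn by simp
  ultimately show ?thesis by (simp add: sum.distrib)
qed

lemma D_ge: "1 \<le> D" using sum_s by linarith

lemma mdeg_cm: "mdeg n (cm m) = N m"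
proof -
  have "mdeg n (cm m) = mabs n \<alpha> + mabs n \<beta> + 2 * m * (\<Sum>j<n. s j)"
    unfolding mdeg_def mabs_def cm_def by (simp add: sum.distrib sum_distrib_left[symmetric] algebra_simps)
  moreover have "(\<Sum>j<n. s j) = D - 1" using sum_s by linarith
  ultimately show ?thesis by (simp add: N_def)
qed

lemma U_zero: "j \<ge> n \<Longrightarrow> U m j = 0" using an bn tn by (simp add: U_def)
lemma U_Suc: "U (Suc m) j = U m j + 2 * t j" by (simp add: U_def algebra_simps)
lemma N_Suc: "N (Suc m) = N m + 2 * (D - 1)" by (simp add: N_def algebra_simps)

lemma cm_zero: "j \<ge> n \<Longrightarrow> fst (cm m) j = 0 \<and> snd (cm m) j = 0"
  using an bn tn kn by (simp add: cm_def s_def)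

lemma cm_Suc: "fst (cm (Suc m)) j + (if j = k then 1 else 0) = fst (cm m) j + t j"
   "snd (cm (Suc m)) j + (if j = k then 1 else 0) = snd (cm m) j + t j"
  using s_t[of j] by (simp_all add: cm_def algebra_simps)

lemma cm_U: "j \<noteq> k \<Longrightarrow> fst (cm m) j + snd (cm m) j = U m j"
  by (simp add: cm_def U_def s_def algebra_simps)

lemma fin_inv: "Inv m f \<Longrightarrow> finite (wsupp f)"
proof -
  assume "Inv m f"
  then have "wsupp f \<subseteq> {\<gamma>::mono. \<forall>j. fst \<gamma> j + snd \<gamma> j \<le> U m j}"
    unfolding Inv_def wsupp_def by auto
  moreover have "finite {\<gamma>::mono. \<forall>j. fst \<gamma> j + snd \<gamma> j \<le> U m j}"
    by (rule fin_box[where n=n]) (simp add: U_zero)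
  ultimately show ?thesis by (rule finite_subset)
qed

lemma base: "Inv 0 (gen \<sigma> (\<alpha>, \<beta>))"
proof -
  have ne: "(\<alpha>, \<beta>) \<noteq> (\<beta>, \<alpha>)" using abk by auto
  have sup: "\<And>\<gamma>. gen \<sigma> (\<alpha>, \<beta>) \<gamma> \<noteq> 0 \<Longrightarrow> \<gamma> = (\<alpha>, \<beta>) \<or> \<gamma> = (\<beta>, \<alpha>)"
    unfolding gen_def basis_def mdag_def by (cases \<sigma>) (auto split: if_splits)
  have c0: "cm 0 = (\<alpha>, \<beta>)" by (simp add: cm_def)
  have g0: "gen \<sigma> (\<alpha>, \<beta>) (\<alpha>, \<beta>) \<noteq> 0"
    using ne unfolding gen_def basis_def mdag_def by (cases \<sigma>) auto
  have "(\<forall>j. fst \<gamma> j + snd \<gamma> j \<le> U 0 j) \<and> mdeg n \<gamma> \<le> N 0"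
    if "gen \<sigma> (\<alpha>, \<beta>) \<gamma> \<noteq> 0" for \<gamma>
    using sup[OF that] by (elim disjE) (auto simp: U_def N_def mdeg_def add.commute)
  then show ?thesis unfolding Inv_def c0 using g0 by blast
qed

lemma step:
  assumes I: "Inv m f"
  shows "Inv (Suc m) (wcomm n (gen Plus (t,t)) f)"
proof -
  let ?h = "wcomm n (gen Plus (t,t)) f"
  let ?T = "(t,t) :: mono"
  have fin: "finite (wsupp f)" using I by (rule fin_inv)
  have bnd: "\<And>\<gamma>. f \<gamma> \<noteq> 0 \<Longrightarrow> (\<forall>j. fst \<gamma> j + snd \<gamma> j \<le> U m j) \<and> mdeg n \<gamma> \<le> N m"
    using I unfolding Inv_def by blast
  have dT: "mdeg n ?T = 2*D" by (simp add: mdeg_def D_def)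
  have key: "(\<exists>j<n. t j + fst \<gamma> j - fst \<delta> j > 0)
      \<and> (\<forall>j<n. fst \<delta> j \<le> t j + fst \<gamma> j \<and> snd \<delta> j + (t j + fst \<gamma> j - fst \<delta> j) = t j + snd \<gamma> j)
      \<and> (\<forall>j\<ge>n. fst \<delta> j = 0 \<and> snd \<delta> j = 0)
      \<and> mdeg n \<delta> + 2*(\<Sum>j<n. t j + fst \<gamma> j - fst \<delta> j) = 2*D + mdeg n \<gamma>"
    if ne: "mono_coeff n ?T \<gamma> \<delta> \<noteq> mono_coeff n \<gamma> ?T \<delta>" for \<gamma> \<delta>
  proof -
    have ex: "\<exists>j<n. t j + fst \<gamma> j - fst \<delta> j > 0" using mc_swap[of n ?T \<gamma> \<delta>] ne by force
    have e: "mono_coeff n ?T \<gamma> \<delta> \<noteq> 0 \<or> mono_coeff n \<gamma> ?T \<delta> \<noteq> 0" using ne by auto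
    note A = mc_nz_either[OF e]
    have A1: "\<forall>j<n. fst \<delta> j \<le> t j + fst \<gamma> j \<and> snd \<delta> j + (t j + fst \<gamma> j - fst \<delta> j) = t j + snd \<gamma> j"
      using A(1) by (simp only: fst_conv snd_conv)
    have deg: "mdeg n \<delta> + 2*(\<Sum>j<n. t j + fst \<gamma> j - fst \<delta> j) = mdeg n ?T + mdeg n \<gamma>"
      using deg_from[of n \<delta> ?T \<gamma>] A(1) by (simp only: fst_conv snd_conv)
    show ?thesis using ex A1 A(2) deg unfolding dT by blast
  qed
  have sup: "\<forall>\<delta>. ?h \<delta> \<noteq> 0 \<longrightarrow> (\<forall>j. fst \<delta> j + snd \<delta> j \<le> U (Suc m) j) \<and> mdeg n \<delta> \<le> N (Suc m)"
  proof (intro allI impI)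
    fix \<delta> assume "?h \<delta> \<noteq> 0"
    then obtain \<gamma> where \<gamma>S: "\<gamma> \<in> wsupp f" and tm: "2*\<i> * f \<gamma> *
      (of_nat (mono_coeff n ?T \<gamma> \<delta>) - of_nat (mono_coeff n \<gamma> ?T \<delta>)) \<noteq> (0::complex)"
      unfolding wcomm_h by (meson sum.neutral)
    then have fg: "f \<gamma> \<noteq> 0" and ne: "mono_coeff n ?T \<gamma> \<delta> \<noteq> mono_coeff n \<gamma> ?T \<delta>"
      by (auto simp: wsupp_def)
    note K = key[OF ne]
    from K obtain j0 where j0: "j0 < n" "t j0 + fst \<gamma> j0 - fst \<delta> j0 > 0" by blast
    have "t j0 + fst \<gamma> j0 - fst \<delta> j0 \<le> (\<Sum>j<n. t j + fst \<gamma> j - fst \<delta> j)"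
      using j0 by (intro member_le_sum) auto
    then have "mdeg n \<delta> + 2 \<le> 2*D + mdeg n \<gamma>" using K j0 by linarith
    then have dg: "mdeg n \<delta> \<le> N (Suc m)" using bnd[OF fg] D_ge N_Suc[of m] by linarith
    have "fst \<delta> j + snd \<delta> j \<le> U (Suc m) j" for j
    proof (cases "j < n")
      case True
      have a: "fst \<delta> j \<le> t j + fst \<gamma> j" "snd \<delta> j + (t j + fst \<gamma> j - fst \<delta> j) = t j + snd \<gamma> j"
        using K True by auto
      have b: "fst \<gamma> j + snd \<gamma> j \<le> U m j" using bnd[OF fg] by blast
      show ?thesis using a b U_Suc[of m j] by linarith
    next
      case False
      then show ?thesis using K by simp
    qed
    then show "(\<forall>j. fst \<delta> j + snd \<delta> j \<le> U (Suc m) j) \<and> mdeg n \<delta> \<le> N (Suc m)" using dg by blast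
  qed
  let ?C = "cm (Suc m)"
  have cmS: "cm m \<in> wsupp f" using I by (simp add: Inv_def wsupp_def)
  have zero: "mono_coeff n ?T \<gamma> ?C = mono_coeff n \<gamma> ?T ?C"
    if \<gamma>S: "\<gamma> \<in> wsupp f" and neq: "\<gamma> \<noteq> cm m" for \<gamma>
  proof (rule ccontr)
    assume ne: "mono_coeff n ?T \<gamma> ?C \<noteq> mono_coeff n \<gamma> ?T ?C"
    have fg: "f \<gamma> \<noteq> 0" using \<gamma>S by (simp add: wsupp_def)
    define \<kappa> where "\<kappa> j = t j + fst \<gamma> j - fst ?C j" for j
    note K = key[OF ne, folded \<kappa>_def]
    from K obtain j0 where j0: "j0 < n" "\<kappa> j0 > 0" by blast
    note B = bnd[OF fg]
    have "mdeg n ?C = N (Suc m)" by (rule mdeg_cm)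
    then have s1: "(\<Sum>j<n. \<kappa> j) \<le> 1" using K B D_ge N_Suc[of m] by linarith
    have k0: "\<kappa> j = 0" if "j < n" "j \<noteq> j0" for j
    proof -
      have "(\<Sum>i\<in>{j0, j}. \<kappa> i) \<le> (\<Sum>i<n. \<kappa> i)"
        by (rule sum_mono2) (use that j0 in auto)
      then show ?thesis using that j0 s1 by simp
    qed
    have kj0: "\<kappa> j0 = 1"
    proof -
      have "\<kappa> j0 \<le> (\<Sum>i<n. \<kappa> i)" by (rule member_le_sum) (use j0 in auto)
      then show ?thesis using s1 j0 by linarith
    qed
    have jk: "j0 = k"
    proof (rule ccontr)
      assume "j0 \<noteq> k"
      have "fst ?C j0 + snd ?C j0 + 2 = fst \<gamma> j0 + snd \<gamma> j0 + 2 * t j0"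
        using K j0 kj0 by (auto simp: \<kappa>_def)
      moreover have "fst \<gamma> j0 + snd \<gamma> j0 \<le> U m j0" using B by blast
      moreover have "fst ?C j0 + snd ?C j0 = U (Suc m) j0" using cm_U \<open>j0 \<noteq> k\<close> by blast
      ultimately show False using U_Suc[of m j0] by linarith
    qed
    have kk: "\<kappa> j = (if j = k then 1 else 0)" if "j < n" for j
      using k0[OF that] kj0 jk by auto
    have "fst \<gamma> j = fst (cm m) j \<and> snd \<gamma> j = snd (cm m) j" for j
    proof (cases "j < n")
      case True
      have a: "fst ?C j \<le> t j + fst \<gamma> j" "snd ?C j + \<kappa> j = t j + snd \<gamma> j"
        using K True by (auto simp: \<kappa>_def)
      have b: "\<kappa> j = (if j = k then 1 else 0)" using kk True .
      show ?thesis using a b cm_Suc[of m j] unfolding \<kappa>_def by (auto split: if_splits)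
    next
      case False
      have "fst \<gamma> j + snd \<gamma> j \<le> U m j" using B by blast
      moreover have "U m j = 0" using U_zero[of j m] False by simp
      ultimately have "fst \<gamma> j + snd \<gamma> j \<le> 0" by simp
      then show ?thesis using cm_zero[of j m] False by simp
    qed
    then have "\<gamma> = cm m" by (simp add: prod_eq_iff fun_eq_iff)
    then show False using neq by simp
  qed
  define tm where "tm \<gamma> = 2*\<i> * f \<gamma> * (of_nat (mono_coeff n ?T \<gamma> ?C) - of_nat (mono_coeff n \<gamma> ?T ?C) :: complex)" for \<gamma>
  have "?h ?C = (\<Sum>\<gamma>\<in>wsupp f. if \<gamma> = cm m then tm (cm m) else 0)"
    unfolding wcomm_h by (rule sum.cong) (auto simp: zero tm_def)
  also have "\<dots> = tm (cm m)" using fin cmS by simp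
  finally have hC: "?h ?C = tm (cm m)" .
  have vn: "\<forall>j\<ge>n. fst ?C j = 0 \<and> snd ?C j = 0" using cm_zero by blast
  have f1: "t j + fst (cm m) j - fst ?C j = (if j = k then 1 else 0)" for j
    using cm_Suc(1)[of m j] by (cases "j = k") auto
  have f1': "fst (cm m) j + t j - fst ?C j = (if j = k then 1 else 0)" for j
    using cm_Suc(1)[of m j] by (cases "j = k") auto
  have f2: "fst ?C j \<le> t j + fst (cm m) j" for j
    using cm_Suc(1)[of m j] by (cases "j = k") auto
  have f3: "snd ?C j + (if j = k then 1 else 0) = t j + snd (cm m) j" for j
    using cm_Suc(2)[of m j] by (cases "j = k") auto
  have f2': "fst ?C j \<le> fst (cm m) j + t j" for j
    using cm_Suc(1)[of m j] by (cases "j = k") auto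
  have f3': "snd ?C j + (if j = k then 1 else 0) = snd (cm m) j + t j" for j
    using cm_Suc(2)[of m j] by (cases "j = k") auto
  have m1: "mono_coeff n ?T (cm m) ?C = t k * fst (cm m) k"
  proof -
    have "mono_coeff n ?T (cm m) ?C = snd ?T k * fst (cm m) k"
      by (rule mc_one[OF kn]) (simp_all only: fst_conv snd_conv f1 f2 f3 vn, simp_all add: vn cm_zero)
    then show ?thesis by simp
  qed
  have m2: "mono_coeff n (cm m) ?T ?C = snd (cm m) k * t k"
  proof -
    have "mono_coeff n (cm m) ?T ?C = snd (cm m) k * fst ?T k"
      by (rule mc_one[OF kn]) (simp_all only: fst_conv snd_conv f1' f2' f3' vn, simp_all add: vn cm_zero)
    then show ?thesis by simp
  qed
  have "fst (cm m) k \<noteq> snd (cm m) k" using abk by (simp add: cm_def)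
  then have "t k * fst (cm m) k \<noteq> snd (cm m) k * t k" using tk by simp
  moreover have fc: "f (cm m) \<noteq> 0" using I by (simp add: Inv_def)
  ultimately have "tm (cm m) \<noteq> 0" unfolding tm_def m1 m2 by simp
  then have "?h ?C \<noteq> 0" using hC by simp
  then show ?thesis unfolding Inv_def using sup by blast
qed

lemma inv_chain: "Inv l (chainI n (gen \<sigma> (\<alpha>, \<beta>)) (gen Plus (t, t)) l)"
proof (induction l)
  case 0 then show ?case using base by (simp add: chainI_def)
next
  case (Suc l) then show ?case using step by (simp add: chainI_def)
qed

lemma main: "chainI n (gen \<sigma> (\<alpha>, \<beta>)) (gen Plus (t, t)) l \<noteq> (\<lambda>_. 0)
           \<and> int (wdeg n (chainI n (gen \<sigma> (\<alpha>, \<beta>)) (gen Plus (t, t)) l))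
               = 2 * int l * (int (mabs n t) - 1) + int (mabs n \<alpha>) + int (mabs n \<beta>)"
proof -
  define z where "z = chainI n (gen \<sigma> (\<alpha>, \<beta>)) (gen Plus (t, t)) l"
  have I: "Inv l z" unfolding z_def by (rule inv_chain)
  have nz: "z (cm l) \<noteq> 0" using I by (simp add: Inv_def)
  have fin: "finite (wsupp z)" using I by (rule fin_inv)
  have lam: "(\<lambda>\<gamma>. mabs n (fst \<gamma>) + mabs n (snd \<gamma>)) = mdeg n" by (rule ext) (simp add: mdeg_def)
  have "wdeg n z = N l"
    unfolding wdeg_def lam
  proof (rule Max_eqI)
    show "finite (mdeg n ` wsupp z)" using fin by simp
    show "y \<le> N l" if "y \<in> mdeg n ` wsupp z" for y using that I by (auto simp: Inv_def wsupp_def)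
    show "N l \<in> mdeg n ` wsupp z" using nz mdeg_cm[of l] by (auto simp: wsupp_def intro!: image_eqI[where x="cm l"])
  qed
  moreover have "z \<noteq> (\<lambda>_. 0)" using nz by auto
  moreover obtain d where d: "D = Suc d" using D_ge by (cases D) auto
  moreover have "int (mabs n t) = int D" by (simp add: D_def)
  ultimately show ?thesis unfolding z_def[symmetric] by (simp add: N_def d)
qed

end


theorem theorem6:
  fixes n k :: nat and \<alpha> \<beta> \<alpha>t :: "nat \<Rightarrow> nat" and \<sigma> :: sign
  assumes "n \<ge> 1"
    and "\<forall>j\<ge>n. \<alpha> j = 0" and "\<forall>j\<ge>n. \<beta> j = 0" and "\<forall>j\<ge>n. \<alpha>t j = 0"
    and "lex_ge n \<alpha> \<beta>"
    and "\<sigma> = Minus \<longrightarrow> lex_gt n \<alpha> \<beta>"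
    and "k < n" and "\<alpha> k \<noteq> \<beta> k" and "\<alpha>t k \<noteq> 0"
  shows "\<forall>l. chainI n (gen \<sigma> (\<alpha>, \<beta>)) (gen Plus (\<alpha>t, \<alpha>t)) l \<noteq> (\<lambda>_. 0)
           \<and> int (wdeg n (chainI n (gen \<sigma> (\<alpha>, \<beta>)) (gen Plus (\<alpha>t, \<alpha>t)) l))
               = 2 * int l * (int (mabs n \<alpha>t) - 1) + int (mabs n \<alpha>) + int (mabs n \<beta>)"
  proof -
  interpret ch n k \<alpha> \<beta> \<alpha>t \<sigma> using assms by unfold_locales auto
  show ?thesis using main by blast
qed

end
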